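(* The numbers $P_{1^{-2}2^{1}3^{2}6^{-1}}(n)$, defined by $\sum_{n\ge0}P_{1^{-2}2^{1}3^{2}6^{-1}}(n)q^n=\frac{f_2f_3^2}{f_1^2f_6}$, form a $3$-convolutive sequence.
   Context: $f_i:=(q^i;q^i)_\infty=\prod_{k\ge1}(1-q^{ik})$. A sequence $(a_n)_{n\ge0}$ is $m$-convolutive if $\sum_{n\ge0}a_{mn}q^n=\big(\sum_{n\ge0}a_nq^n\big)^m$. *)

theory Defs
  imports "HOL-Computational_Algebra.Formal_Power_Series"
begin

text \<open>f_i = (q^i;q^i)_\<infinity> = prod_{k>=1} (1 - q^(i k)) as a formal power series.
  For i >= 1 the factors with k > n do not affect the coefficient of q^n, so the
  n-th coefficient of the infinite product is that of the finite product over k in 1..n.\<close>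
definition eta_fps :: "nat \<Rightarrow> rat fps" where
  "eta_fps i = Abs_fps (\<lambda>n. fps_nth (\<Prod>k\<in>{1..n}. (1 - fps_X ^ (i * k))) n)"

definition m_convolutive :: "nat \<Rightarrow> (nat \<Rightarrow> 'a::comm_ring_1) \<Rightarrow> bool" where
  "m_convolutive m a \<longleftrightarrow> Abs_fps (\<lambda>n. a (m * n)) = (Abs_fps a) ^ m"

definition P_seq :: "nat \<Rightarrow> rat" where
  "P_seq n = fps_nth (eta_fps 2 * eta_fps 3 ^ 2 / (eta_fps 1 ^ 2 * eta_fps 6)) n"

end

theory Submission
  imports Defs
begin

unbundle fps_syntax


definition ceq :: "nat \<Rightarrow> 'a::comm_ring_1 fps \<Rightarrow> 'a fps \<Rightarrow> bool" where
  "ceq c a b \<longleftrightarrow> (\<forall>m<c. a $ m = b $ m)"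

lemma ceq_refl[simp]: "ceq c a a" by (simp add: ceq_def)
lemma ceq_sym: "ceq c a b \<Longrightarrow> ceq c b a" by (simp add: ceq_def)
lemma ceq_trans: "ceq c a b \<Longrightarrow> ceq c b d \<Longrightarrow> ceq c a d" by (simp add: ceq_def)
lemma ceq_mono: "ceq c a b \<Longrightarrow> c' \<le> c \<Longrightarrow> ceq c' a b" by (simp add: ceq_def)
lemma ceq_add: "ceq c a b \<Longrightarrow> ceq c a' b' \<Longrightarrow> ceq c (a + a') (b + b')"
  by (simp add: ceq_def)
lemma ceq_diff: "ceq c a b \<Longrightarrow> ceq c a' b' \<Longrightarrow> ceq c (a - a') (b - b')"
  by (simp add: ceq_def)
lemma ceq_mult: "ceq c a b \<Longrightarrow> ceq c a' b' \<Longrightarrow> ceq c (a * a') (b * b')"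
  unfolding ceq_def fps_mult_nth by (auto intro!: sum.cong)
lemma ceq_prod: "finite S \<Longrightarrow> (\<And>i. i \<in> S \<Longrightarrow> ceq c (f i) (g i)) \<Longrightarrow> ceq c (prod f S) (prod g S)"
  by (induction S rule: finite_induct) (auto intro: ceq_mult)
lemma ceq_sum: "(\<And>i. i \<in> S \<Longrightarrow> ceq c (f i) (g i)) \<Longrightarrow> ceq c (sum f S) (sum g S)"
  by (induction S rule: infinite_finite_induct) (auto intro: ceq_add)
lemma ceq_power: "ceq c a b \<Longrightarrow> ceq c (a ^ n) (b ^ n)"
  by (induction n) (auto intro: ceq_mult)
lemma ceq_eq: "(\<And>c. ceq c a b) \<Longrightarrow> a = b"
  unfolding ceq_def by (intro fps_ext) (meson lessI)
lemma ceq_Xpow: "c \<le> n \<Longrightarrow> ceq c (fps_X ^ n * a) 0"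
  by (simp add: ceq_def fps_X_power_mult_nth)

lemma ceq_one_minus: "c \<le> n \<Longrightarrow> ceq c (1 - fps_X ^ n) 1"
  by (simp add: ceq_def)

definition etag :: "nat \<Rightarrow> complex fps" where
  "etag i = Abs_fps (\<lambda>n. fps_nth (\<Prod>k\<in>{1..n}. (1 - fps_X ^ (i * k))) n)"

lemma trunc_prod:
  assumes "i \<ge> 1" "c \<le> Suc M" "M \<le> M'"
  shows "ceq c ((\<Prod>k\<in>{1..M}. (1 - fps_X ^ (i * k))) :: 'a::comm_ring_1 fps)
                 (\<Prod>k\<in>{1..M'}. (1 - fps_X ^ (i * k)))"
proof -
  have split: "{1..M'} = {1..M} \<union> {M+1..M'}" using assms by auto
  have "(\<Prod>k\<in>{1..M'}. (1 - fps_X ^ (i * k)) :: 'a fps) =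
        (\<Prod>k\<in>{1..M}. (1 - fps_X ^ (i * k))) * (\<Prod>k\<in>{M+1..M'}. (1 - fps_X ^ (i * k)))"
    unfolding split by (subst prod.union_disjoint) auto
  moreover have "ceq c (\<Prod>k\<in>{M+1..M'}. (1 - fps_X ^ (i * k)) :: 'a fps) (\<Prod>k\<in>{M+1..M'}. 1)"
  proof (rule ceq_prod)
    fix k assume "k \<in> {M+1..M'}"
    then have "Suc M \<le> k" by simp
    then have "c \<le> k" using assms(2) by linarith
    also have "k \<le> i * k" using assms(1) by simp
    finally have "c \<le> i * k" .
    then show "ceq c (1 - fps_X ^ (i * k)) 1" by (rule ceq_one_minus)
  qed simp
  then have "ceq c (\<Prod>k\<in>{M+1..M'}. (1 - fps_X ^ (i * k)) :: 'a fps) 1" by simp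
  then have "ceq c ((\<Prod>k\<in>{1..M}. (1 - fps_X ^ (i * k))) * (\<Prod>k\<in>{M+1..M'}. (1 - fps_X ^ (i * k)) :: 'a fps))
     ((\<Prod>k\<in>{1..M}. (1 - fps_X ^ (i * k))) * 1)" by (intro ceq_mult) auto
  ultimately show ?thesis by (simp add: ceq_sym)
qed

lemma etag_trunc:
  assumes "i \<ge> 1" "c \<le> M"
  shows "ceq c (etag i) (\<Prod>k\<in>{1..M}. (1 - fps_X ^ (i * k)))"
  unfolding ceq_def
proof (intro allI impI)
  fix m assume "m < c"
  have "ceq (Suc m) ((\<Prod>k\<in>{1..m}. (1 - fps_X ^ (i * k))) :: complex fps) (\<Prod>k\<in>{1..M}. (1 - fps_X ^ (i * k)))"
    using assms \<open>m < c\<close> by (intro trunc_prod) auto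
  then show "etag i $ m = (\<Prod>k\<in>{1..M}. (1 - fps_X ^ (i * k))) $ m"
    by (simp add: etag_def ceq_def)
qed

lemma etag_0[simp]: "etag i $ 0 = 1"
  by (simp add: etag_def)

lemma dil_nth:
  assumes "k \<ge> 1"
  shows "(f oo fps_X ^ k) $ n = (if k dvd n then f $ (n div k) else (0::'a::comm_ring_1))"
proof -
  have "(f oo fps_X ^ k) $ n = (\<Sum>i=0..n. (if i = n div k \<and> k dvd n then f $ i else 0))"
    unfolding fps_compose_nth power_mult[symmetric]
    by (intro sum.cong) (use assms in \<open>auto simp: fps_X_power_nth\<close>)
  also have "\<dots> = (if k dvd n then f $ (n div k) else 0)"
  proof (cases "k dvd n")
    case True
    have "n div k \<le> n" by simp
    then show ?thesis using True by (simp add: sum.delta')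
  qed simp
  finally show ?thesis .
qed

lemma Xk0: "k \<ge> 1 \<Longrightarrow> (fps_X ^ k :: 'a::comm_ring_1 fps) $ 0 = 0" by simp

lemma ceq_dil: "ceq c a b \<Longrightarrow> k \<ge> 1 \<Longrightarrow> ceq c (a oo fps_X ^ k) (b oo fps_X ^ k)"
  unfolding ceq_def by (auto simp: dil_nth) (metis div_le_dividend le_less_trans)

lemma ceq_sc: "ceq c a b \<Longrightarrow> ceq c (a oo (fps_const z * fps_X)) (b oo (fps_const z * fps_X))"
  unfolding ceq_def by auto

lemma dil_one_minus: "k \<ge> 1 \<Longrightarrow> (1 - fps_X ^ n) oo fps_X ^ k = (1 - fps_X ^ (k * n) :: 'a::idom fps)"
  by (simp add: fps_compose_sub_distrib fps_X_power_compose power_mult)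

lemma sc_one_minus: "(1 - fps_X ^ n) oo (fps_const z * fps_X) = (1 - fps_const (z ^ n) * fps_X ^ n :: 'a::idom fps)"
  by (simp add: fps_compose_sub_distrib fps_X_power_compose power_mult_distrib fps_const_power)

lemma dil_etag:
  assumes "k \<ge> 1" "i \<ge> 1"
  shows "etag i oo fps_X ^ k = etag (k * i)"
proof (rule ceq_eq)
  fix c
  note calc = ceq_trans
  have "ceq c (etag i oo fps_X ^ k) ((\<Prod>j\<in>{1..c}. (1 - fps_X ^ (i * j))) oo fps_X ^ k)"
    using assms by (intro ceq_dil etag_trunc) auto
  also have "(\<Prod>j\<in>{1..c}. (1 - fps_X ^ (i * j))) oo fps_X ^ k = (\<Prod>j\<in>{1..c}. (1 - fps_X ^ (k * i * j)) :: complex fps)"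
    using assms by (simp add: fps_compose_prod_distrib dil_one_minus mult.assoc)
  finally have 1: "ceq c (etag i oo fps_X ^ k) (\<Prod>j\<in>{1..c}. (1 - fps_X ^ (k * i * j)))" .
  have 2: "ceq c (etag (k*i)) (\<Prod>j\<in>{1..c}. (1 - fps_X ^ (k * i * j)))"
    using assms by (intro etag_trunc) auto
  show "ceq c (etag i oo fps_X ^ k) (etag (k * i))" using 1 2 ceq_sym ceq_trans by blast
qed

fun qb :: "'a::comm_ring_1 \<Rightarrow> nat \<Rightarrow> nat \<Rightarrow> 'a" where
  "qb p 0 0 = 1"
| "qb p 0 (Suc j) = 0"
| "qb p (Suc N) 0 = 1"
| "qb p (Suc N) (Suc j) = qb p N j + p ^ (Suc j) * qb p N (Suc j)"

lemma qb_above: "N < j \<Longrightarrow> qb p N j = 0"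
proof (induction N arbitrary: j)
  case 0 then show ?case by (cases j) auto
next
  case (Suc N) then show ?case by (cases j) auto
qed

lemma qb_N0[simp]: "qb p N 0 = 1" by (cases N) auto

lemma exp_aux: "Suc j * j = j * (j - 1) + 2 * j" by (cases j) auto
lemma exp_aux2: "(r::'a::comm_ring_1) ^ (Suc j * j) = r ^ (j * (j - 1)) * r ^ (2 * j)"
  by (simp only: exp_aux power_add)

lemma rothe:
  fixes r s t :: "'a::comm_ring_1"
  shows "(\<Prod>i<N. (s + r ^ (2 * i) * t)) =
         (\<Sum>j\<le>N. qb (r^2) N j * r ^ (j * (j - 1)) * t ^ j * s ^ (N - j))"
proof (induction N arbitrary: t)
  case 0 then show ?case by simp
next
  case (Suc N)
  define S where "S = (\<Sum>j\<le>N. qb (r^2) N j * r ^ (j * (j - 1)) * (r^2 * t) ^ j * s ^ (N - j))"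
  have "(\<Prod>i<Suc N. (s + r ^ (2 * i) * t)) = (s + t) * (\<Prod>i<N. (s + r ^ (2 * i) * (r^2 * t)))"
    by (subst prod.lessThan_Suc_shift) (simp add: power_add power2_eq_square mult.assoc mult.commute mult.left_commute)
  also have "\<dots> = (s + t) * S" using Suc S_def by simp
  finally have L: "(\<Prod>i<Suc N. (s + r ^ (2 * i) * t)) = s * S + t * S" by (simp add: distrib_right)
  define g where "g j = qb (r^2) N j * r ^ (j * (j - 1)) * (r^2 * t) ^ j * s ^ (Suc N - j)" for j
  have g1: "(\<Sum>j\<le>Suc N. g j) = s * S"
  proof -
    have "(\<Sum>j\<le>Suc N. g j) = (\<Sum>j\<le>N. g j) + g (Suc N)" by simp
    also have "g (Suc N) = 0" by (simp add: g_def qb_above)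
    also have "(\<Sum>j\<le>N. g j) = s * S" unfolding S_def sum_distrib_left
      by (intro sum.cong) (auto simp: g_def Suc_diff_le)
    finally show ?thesis by simp
  qed
  have g2: "(\<Sum>j\<le>Suc N. g j) = s ^ Suc N + (\<Sum>j\<le>N. r ^ (2 * Suc j) * qb (r^2) N (Suc j) * r ^ (Suc j * j) * t ^ Suc j * s ^ (N - j))"
    apply (subst sum.atMost_Suc_shift)
    apply (simp add: g_def)
    apply (intro sum.cong refl)
    apply (simp add: power_mult_distrib power_add power_mult[symmetric] exp_aux)
    apply (simp add: algebra_simps power_add power2_eq_square)
    done
  have g3: "(\<Sum>j\<le>N. qb (r^2) N j * r ^ (Suc j * j) * t ^ Suc j * s ^ (N - j)) = t * S"
    unfolding S_def sum_distrib_left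
    apply (intro sum.cong refl)
    apply (subst exp_aux2)
    apply (simp only: power_mult_distrib power_mult[symmetric] power_Suc)
    apply (simp only: mult_ac)
    done
  have R: "(\<Sum>j\<le>Suc N. qb (r^2) (Suc N) j * r ^ (j * (j - 1)) * t ^ j * s ^ (Suc N - j))
      = s ^ Suc N + (\<Sum>j\<le>N. qb (r^2) N j * r ^ (Suc j * j) * t ^ Suc j * s ^ (N - j))
        + (\<Sum>j\<le>N. r ^ (2 * Suc j) * qb (r^2) N (Suc j) * r ^ (Suc j * j) * t ^ Suc j * s ^ (N - j))"
    apply (subst sum.atMost_Suc_shift)
    apply (simp add: distrib_right sum.distrib power_mult power2_eq_square)
    apply (simp add: mult_ac)
    done
  show ?case unfolding L R g3 using g1 g2 by (simp add: algebra_simps)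
qed

definition Pp :: "'a::comm_ring_1 \<Rightarrow> nat \<Rightarrow> 'a" where
  "Pp p n = (\<Prod>k\<in>{1..n}. (1 - p ^ k))"

lemma Pp_0[simp]: "Pp p 0 = 1" by (simp add: Pp_def)
lemma Pp_Suc: "Pp p (Suc n) = Pp p n * (1 - p ^ Suc n)"
  by (simp add: Pp_def prod.cl_ivl_Suc)

lemma qb_prod:
  fixes p :: "'a::comm_ring_1"
  shows "j \<le> N \<Longrightarrow> qb p N j * Pp p j * Pp p (N - j) = Pp p N"
proof (induction N arbitrary: j)
  case 0 then show ?case by simp
next
  case (Suc N)
  show ?case
  proof (cases j)
    case 0 then show ?thesis by simp
  next
    case (Suc j')
    with Suc.prems have j': "j' \<le> N" by simp
    have T1: "qb p N j' * Pp p (Suc j') * Pp p (Suc N - Suc j') = Pp p N * (1 - p ^ Suc j')"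
    proof -
      have "qb p N j' * Pp p (Suc j') * Pp p (Suc N - Suc j') = (qb p N j' * Pp p j' * Pp p (N - j')) * (1 - p ^ Suc j')"
        by (simp add: Pp_Suc mult_ac)
      then show ?thesis using Suc.IH[OF j'] by simp
    qed
    have T2: "p ^ Suc j' * qb p N (Suc j') * Pp p (Suc j') * Pp p (Suc N - Suc j') = p ^ Suc j' * Pp p N * (1 - p ^ (N - j'))"
    proof (cases "j' < N")
      case True
      then have "N - j' = Suc (N - Suc j')" by simp
      then have "Pp p (Suc N - Suc j') = Pp p (N - Suc j') * (1 - p ^ (N - j'))" by (simp add: Pp_Suc)
      then have "p ^ Suc j' * qb p N (Suc j') * Pp p (Suc j') * Pp p (Suc N - Suc j') =
         p ^ Suc j' * (qb p N (Suc j') * Pp p (Suc j') * Pp p (N - Suc j')) * (1 - p ^ (N - j'))"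
        by (simp add: mult_ac)
      then show ?thesis using Suc.IH[of "Suc j'"] True by simp
    next
      case False
      then have "N = j'" using j' by simp
      then show ?thesis by (simp add: qb_above)
    qed
    have "qb p (Suc N) j * Pp p j * Pp p (Suc N - j) = Pp p N * (1 - p ^ Suc j') + p ^ Suc j' * Pp p N * (1 - p ^ (N - j'))"
    proof -
      have "qb p (Suc N) j * Pp p j * Pp p (Suc N - j) = qb p N j' * Pp p (Suc j') * Pp p (Suc N - Suc j') + p ^ Suc j' * qb p N (Suc j') * Pp p (Suc j') * Pp p (Suc N - Suc j')"
        unfolding Suc qb.simps by (simp only: distrib_right mult.assoc)
      then show ?thesis by (simp only: T1 T2)
    qed
    also have "\<dots> = Pp p N * (1 - p ^ Suc j' * p ^ (N - j'))" by (simp add: algebra_simps)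
    also have "p ^ Suc j' * p ^ (N - j') = p ^ Suc N" using j' by (simp only: power_add[symmetric]) simp
    finally show ?thesis by (simp add: Pp_Suc)
  qed
qed

lemma ceq_cancel:
  fixes u :: "'a::field fps"
  assumes "u $ 0 \<noteq> 0" "ceq c (a * u) (b * u)"
  shows "ceq c a b"
proof -
  have "ceq c (a * u * inverse u) (b * u * inverse u)" by (rule ceq_mult[OF assms(2) ceq_refl])
  moreover have "u * inverse u = 1" using assms(1) by (rule inverse_mult_eq_1')
  ultimately show ?thesis by (simp add: mult.assoc)
qed

lemma Pp_X2: "Pp (fps_X ^ 2) n = (\<Prod>k\<in>{1..n}. (1 - fps_X ^ (2 * k)))"
  by (simp add: Pp_def power_mult)

lemma Pp_0th[simp]: "Pp (fps_X ^ 2 :: 'a::comm_ring_1 fps) n $ 0 = 1"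
  unfolding Pp_def
  by (induction n) (simp_all add: prod.cl_ivl_Suc)

lemma qb_stable:
  assumes "j \<le> N" "c \<le> Suc (N - j)"
  shows "ceq c (qb (fps_X ^ 2) N j * Pp (fps_X ^ 2) j) (1 :: complex fps)"
proof -
  have "ceq c (Pp (fps_X ^ 2) N) (Pp (fps_X ^ 2) (N - j) :: complex fps)"
    unfolding Pp_X2 using assms by (intro ceq_sym[OF trunc_prod]) auto
  then have "ceq c (qb (fps_X ^ 2) N j * Pp (fps_X ^ 2) j * Pp (fps_X ^ 2) (N - j)) (1 * Pp (fps_X ^ 2) (N - j) :: complex fps)"
    using qb_prod[OF assms(1), of "fps_X ^ 2 :: complex fps"] by simp
  then show ?thesis by (rule ceq_cancel[rotated]) simp
qed


definition dd :: "nat \<Rightarrow> nat \<Rightarrow> nat" where "dd j n = (if j \<le> n then n - j else j - n)"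

lemma exp_id:
  assumes "j \<le> 2 * n"
  shows "j * (j - 1) + (2 * n - 1) * (2 * n - j) = dd j n ^ 2 + (n * (n - 1) + (2 * n - 1) * n)"
proof (cases "j \<le> n")
  case True
  then obtain d where n: "n = j + d" by (metis le_add_diff_inverse)
  show ?thesis unfolding dd_def n using True
    by (cases j; cases d) (auto simp: algebra_simps power2_eq_square)
next
  case False
  then obtain d where j: "j = n + Suc d" by (metis add_Suc_right le_add_diff_inverse less_imp_Suc_add not_le)
  then have "d < n" using assms by simp
  then obtain e where n: "n = Suc d + e" by (metis add_Suc less_imp_Suc_add)
  show ?thesis unfolding dd_def j n using False
    by (auto simp: algebra_simps power2_eq_square)
qed

lemma prod_double: "prod f {..<(n::nat)+n} = prod f {..<n} * prod (\<lambda>i. f (i+n)) {..<n}"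
proof -
  have "prod f {0..<n+n} = prod f {0..<n} * prod f {n..<n+n}"
    by (simp add: prod.atLeastLessThan_concat)
  also have "prod f {n..<n+n} = prod (\<lambda>i. f (i+n)) {0..<n}"
    using prod.shift_bounds_nat_ivl[of f 0 n n] by simp
  finally show ?thesis by (simp add: atLeast0LessThan)
qed

lemma sum_2i: "(\<Sum>i<n. 2 * i) = n * (n - (1::nat))"
proof (induction n)
  case (Suc n) then show ?case by (cases n) (auto simp: algebra_simps)
qed simp

lemma finite_gauss:
  "(\<Sum>j\<le>2*n. (-1)^j * fps_X ^ (dd j n ^ 2) * qb (fps_X ^ 2) (2*n) j)
     = ((-1)^n * (\<Prod>i<n. (1 - fps_X ^ (2*i+1)))^2 :: complex fps)"
proof -
  define K where "K = n * (n - 1) + (2 * n - 1) * n"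
  define Q where "Q = (\<Prod>i<n. (1 - fps_X ^ (2*i+1)) :: complex fps)"
  have R: "(\<Prod>i<2*n. (fps_X ^ (2*n-1) + fps_X ^ (2 * i) * (-1))) =
     (\<Sum>j\<le>2*n. qb (fps_X ^ 2) (2*n) j * fps_X ^ (j * (j - 1)) * (-1) ^ j * (fps_X ^ (2*n-1)) ^ (2*n - j) :: complex fps)"
    by (rule rothe)
  have R2: "(\<Sum>j\<le>2*n. qb (fps_X ^ 2) (2*n) j * fps_X ^ (j * (j - 1)) * (-1) ^ j * (fps_X ^ (2*n-1)) ^ (2*n - j) :: complex fps)
     = fps_X ^ K * (\<Sum>j\<le>2*n. (-1)^j * fps_X ^ (dd j n ^ 2) * qb (fps_X ^ 2) (2*n) j)"
    unfolding sum_distrib_left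
  proof (intro sum.cong refl)
    fix j assume "j \<in> {..2*n}"
    then have "j * (j - 1) + (2 * n - 1) * (2 * n - j) = dd j n ^ 2 + K" unfolding K_def by (intro exp_id) auto
    then have eq: "fps_X ^ (j * (j - 1)) * (fps_X ^ (2*n-1)) ^ (2*n - j) = (fps_X ^ K * fps_X ^ (dd j n ^ 2) :: complex fps)"
      by (simp only: power_mult[symmetric] power_add[symmetric]) (simp add: add.commute)
    have "qb (fps_X ^ 2) (2*n) j * fps_X ^ (j * (j - 1)) * (-1) ^ j * (fps_X ^ (2*n-1)) ^ (2*n - j)
       = (fps_X ^ (j * (j - 1)) * (fps_X ^ (2*n-1)) ^ (2*n - j)) * ((-1) ^ j * qb (fps_X ^ 2) (2*n) j :: complex fps)"
      by (simp only: mult_ac)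
    also have "\<dots> = fps_X ^ K * fps_X ^ (dd j n ^ 2) * ((-1) ^ j * qb (fps_X ^ 2) (2*n) j)" by (simp only: eq)
    also have "\<dots> = fps_X ^ K * ((-1)^j * fps_X ^ (dd j n ^ 2) * qb (fps_X ^ 2) (2*n) j)" by (simp only: mult_ac)
    finally show "qb (fps_X ^ 2) (2*n) j * fps_X ^ (j * (j - 1)) * (-1) ^ j * (fps_X ^ (2*n-1)) ^ (2*n - j)
       = fps_X ^ K * ((-1)^j * fps_X ^ (dd j n ^ 2) * qb (fps_X ^ 2) (2*n) j :: complex fps)" .
  qed
  have P1: "(\<Prod>i<n. (fps_X ^ (2*n-1) + fps_X ^ (2 * i) * (-1))) = (-1)^n * fps_X ^ (n * (n - 1)) * (Q :: complex fps)"
  proof -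
    have "(\<Prod>i<n. (fps_X ^ (2*n-1) + fps_X ^ (2 * i) * (-1))) =
          (\<Prod>i<n. (-1) * fps_X ^ (2 * i) * (1 - fps_X ^ (2 * (n - Suc i) + 1)) :: complex fps)"
    proof (intro prod.cong refl)
      fix i assume "i \<in> {..<n}"
      then have "2 * i + (2 * (n - Suc i) + 1) = 2 * n - 1" by auto
      then have "fps_X ^ (2 * i) * fps_X ^ (2 * (n - Suc i) + 1) = (fps_X ^ (2*n-1) :: complex fps)"
        by (simp only: power_add[symmetric])
      then show "fps_X ^ (2*n-1) + fps_X ^ (2 * i) * (-1) = (-1) * fps_X ^ (2 * i) * (1 - fps_X ^ (2 * (n - Suc i) + 1) :: complex fps)"
        by (simp add: algebra_simps)
    qed
    also have "\<dots> = (-1)^n * (\<Prod>i<n. fps_X ^ (2 * i)) * (\<Prod>i<n. (1 - fps_X ^ (2 * (n - Suc i) + 1)) :: complex fps)"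
      by (simp only: prod.distrib prod_constant card_lessThan)
    also have "(\<Prod>i<n. (1 - fps_X ^ (2 * (n - Suc i) + 1)) :: complex fps) = Q"
      unfolding Q_def using prod.nat_diff_reindex[of "\<lambda>i. (1 - fps_X ^ (2 * i + 1)) :: complex fps" n] by simp
    also have "(\<Prod>i<n. fps_X ^ (2 * i)) = (fps_X ^ (n * (n - 1)) :: complex fps)"
      by (simp add: power_sum[symmetric] sum_2i)
    finally show ?thesis .
  qed
  have P2: "(\<Prod>i<n. (fps_X ^ (2*n-1) + fps_X ^ (2 * (i + n)) * (-1))) = fps_X ^ ((2 * n - 1) * n) * (Q :: complex fps)"
  proof -
    have "(\<Prod>i<n. (fps_X ^ (2*n-1) + fps_X ^ (2 * (i + n)) * (-1))) =
          (\<Prod>i<n. fps_X ^ (2*n-1) * (1 - fps_X ^ (2 * i + 1)) :: complex fps)"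
    proof (intro prod.cong refl)
      fix i assume "i \<in> {..<n}"
      then have "2 * n - 1 + (2 * i + 1) = 2 * (i + n)" by auto
      then have "fps_X ^ (2 * n - 1) * fps_X ^ (2 * i + 1) = (fps_X ^ (2 * (i + n)) :: complex fps)"
        by (simp only: power_add[symmetric])
      then show "fps_X ^ (2*n-1) + fps_X ^ (2 * (i + n)) * (-1) = fps_X ^ (2*n-1) * (1 - fps_X ^ (2 * i + 1) :: complex fps)"
        by (simp add: algebra_simps)
    qed
    also have "\<dots> = fps_X ^ ((2 * n - 1) * n) * Q"
      unfolding Q_def by (simp add: prod.distrib power_mult)
    finally show ?thesis .
  qed
  have "(\<Prod>i<2*n. (fps_X ^ (2*n-1) + fps_X ^ (2 * i) * (-1))) = fps_X ^ K * ((-1)^n * Q^2 :: complex fps)"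
  proof -
    have st: "{..<2*n} = {..<n+n}" by simp
    show ?thesis unfolding st prod_double P1 P2 K_def power_add by (simp add: power2_eq_square mult_ac)
  qed
  then have "fps_X ^ K * ((-1)^n * Q^2) = fps_X ^ K * (\<Sum>j\<le>2*n. (-1)^j * fps_X ^ (dd j n ^ 2) * qb (fps_X ^ 2) (2*n) j :: complex fps)"
    using R R2 by simp
  then show ?thesis unfolding Q_def by simp
qed

definition theta :: "complex fps" where
  "theta = Abs_fps (\<lambda>m. if \<exists>r. r^2 = m then (if m = 0 then 1 else 2 * (-1)^(THE r. r^2 = m)) else 0)"

lemma theta_sq: "theta $ (r^2) = (if r = 0 then 1 else 2 * (-1)^r)"
proof -
  have "(THE r'. r'^2 = r^2) = r"
    by (rule the_equality) (auto simp: power2_eq_iff_nonneg)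
  then show ?thesis by (auto simp: theta_def)
qed

lemma theta_nonsq: "\<not> (\<exists>r. r^2 = m) \<Longrightarrow> theta $ m = 0"
  by (simp add: theta_def)

lemma theta_0[simp]: "theta $ 0 = 1"
  using theta_sq[of 0] by simp

lemma neg1_pow: "(-1 :: 'a::comm_ring_1 fps)^j = fps_const ((-1)^j)"
  by (simp flip: fps_const_power fps_const_neg)

definition Rn :: "nat \<Rightarrow> complex fps" where
  "Rn n = (\<Sum>j\<le>2*n. (-1)^j * fps_X ^ (dd j n ^ 2))"

lemma Rn_nth: "Rn n $ m = (\<Sum>j\<in>{j\<in>{..2*n}. dd j n ^ 2 = m}. (-1)^j)"
proof -
  have "Rn n $ m = (\<Sum>j\<le>2*n. (if dd j n ^ 2 = m then (-1)^j else 0))"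
    unfolding Rn_def fps_sum_nth neg1_pow by (intro sum.cong refl) auto
  also have "\<dots> = (\<Sum>j\<in>{j\<in>{..2*n}. dd j n ^ 2 = m}. (-1)^j)"
    by (rule sum.inter_filter[of "{..2*n}" "\<lambda>j. (-1)^j" "\<lambda>j. dd j n ^ 2 = m", symmetric]) simp
  finally show ?thesis .
qed

lemma dd_set:
  assumes "r \<le> n"
  shows "{j\<in>{..2*n}. dd j n ^ 2 = r ^ 2} = {n - r, n + r}"
proof -
  have "dd j n ^ 2 = r ^ 2 \<longleftrightarrow> dd j n = r" for j by (simp add: power2_eq_iff_nonneg)
  then show ?thesis using assms by (auto simp: dd_def)
qed

lemma Rn_theta:
  assumes "c \<le> n"
  shows "ceq c (Rn n) ((-1)^n * theta)"
  unfolding ceq_def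
proof (intro allI impI)
  fix m assume "m < c"
  show "Rn n $ m = ((-1)^n * theta) $ m"
  proof (cases "\<exists>r. r^2 = m")
    case True
    then obtain r where r: "m = r^2" by auto
    have "r \<le> r^2" by (simp add: power2_eq_square)
    then have rn: "r < n" using r \<open>m < c\<close> assms by linarith
    show ?thesis
    proof (cases "r = 0")
      case True
      have S: "{j\<in>{..2*n}. dd j n ^ 2 = m} = {n}" using dd_set[of 0 n] r True by simp
      show ?thesis unfolding Rn_nth S using r True by (simp add: neg1_pow theta_sq)
    next
      case False
      have "(-1::complex)^(n - r) = (-1)^(n + r)"
      proof -
        have "n + r = (n - r) + 2 * r" using rn by simp
        then have "(-1::complex)^(n + r) = (-1)^(n-r) * ((-1)^2)^r" by (simp only: power_add power_mult)
        then show ?thesis by simp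
      qed
      moreover have S: "{j\<in>{..2*n}. dd j n ^ 2 = m} = {n - r, n + r}" using dd_set[of r n] r rn by simp
      moreover have "n - r \<noteq> n + r" using False rn by simp
      ultimately show ?thesis unfolding Rn_nth S using r False by (simp add: neg1_pow theta_sq power_add)
    qed
  next
    case False
    then have "{j\<in>{..2*n}. dd j n ^ 2 = m} = {}" by auto
    then show ?thesis using False by (simp add: Rn_nth neg1_pow theta_nonsq)
  qed
qed

lemma prod_1_2n: "(\<Prod>k\<in>{1..2*n}. (1 - fps_X ^ k)) =
   (\<Prod>i<n. (1 - fps_X ^ (2*i+1))) * (\<Prod>k\<in>{1..n}. (1 - fps_X ^ (2*k)) :: 'a::comm_ring_1 fps)"
proof (induction n)
  case 0 then show ?case by simp
next
  case (Suc n)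
  have "{1..2 * Suc n} = insert (Suc (Suc (2*n))) (insert (Suc (2*n)) {1..2*n})" by auto
  then have "(\<Prod>k\<in>{1..2*Suc n}. (1 - fps_X ^ k)) = (1 - fps_X ^ (Suc (Suc (2*n)))) * ((1 - fps_X ^ (Suc (2*n))) * (\<Prod>k\<in>{1..2*n}. (1 - fps_X ^ k) :: 'a fps))"
    by simp
  also have "\<dots> = (\<Prod>i<Suc n. (1 - fps_X ^ (2*i+1))) * (\<Prod>k\<in>{1..Suc n}. (1 - fps_X ^ (2*k)))"
    unfolding Suc.IH by (simp add: prod.cl_ivl_Suc mult_ac)
  finally show ?case .
qed

lemma gauss_term:
  assumes "j \<le> 2 * n" "2 * c \<le> n"
  shows "ceq c (etag 2 * ((-1)^j * fps_X ^ (dd j n ^ 2) * qb (fps_X ^ 2) (2*n) j)) ((-1)^j * fps_X ^ (dd j n ^ 2))"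
proof (cases "c \<le> dd j n ^ 2")
  case True
  have "ceq c (fps_X ^ (dd j n ^ 2) * (etag 2 * (-1)^j * qb (fps_X ^ 2) (2*n) j)) 0" using True by (rule ceq_Xpow)
  moreover have "ceq c (fps_X ^ (dd j n ^ 2) * (-1)^j) (0 :: complex fps)" using True by (rule ceq_Xpow)
  ultimately show ?thesis by (simp add: ceq_def mult_ac)
next
  case False
  have "dd j n \<le> dd j n ^ 2" by (simp add: power2_eq_square)
  then have d: "dd j n < c" using False by linarith
  then have jc: "c \<le> j" and jc2: "c \<le> Suc (2 * n - j)" using assms by (auto simp: dd_def split: if_splits)
  note [trans] = ceq_trans
  have "ceq c (etag 2) (Pp (fps_X ^ 2) j)" unfolding Pp_X2 using jc by (intro etag_trunc) auto
  then have "ceq c (etag 2 * qb (fps_X ^ 2) (2*n) j) (qb (fps_X ^ 2) (2*n) j * Pp (fps_X ^ 2) j)"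
    by (simp add: ceq_mult mult.commute)
  also have "ceq c (qb (fps_X ^ 2) (2*n) j * Pp (fps_X ^ 2) j) (1 :: complex fps)"
    by (rule qb_stable) (use assms jc2 in auto)
  finally have "ceq c (etag 2 * qb (fps_X ^ 2) (2*n) j) 1" .
  then have "ceq c (((-1)^j * fps_X ^ (dd j n ^ 2)) * (etag 2 * qb (fps_X ^ 2) (2*n) j)) (((-1)^j * fps_X ^ (dd j n ^ 2)) * 1)"
    by (intro ceq_mult) auto
  then show ?thesis by (simp add: mult_ac)
qed

lemma gauss: "etag 1 ^ 2 = etag 2 * theta"
proof (rule ceq_eq)
  fix c :: nat
  define n where "n = 2 * c"
  define Q where "Q = (\<Prod>i<n. (1 - fps_X ^ (2*i+1)) :: complex fps)"
  have a: "ceq c (etag 2 * (\<Sum>j\<le>2*n. (-1)^j * fps_X ^ (dd j n ^ 2) * qb (fps_X ^ 2) (2*n) j)) (Rn n)"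
    unfolding Rn_def sum_distrib_left
  proof (rule ceq_sum)
    fix j assume "j \<in> {..2*n}"
    then show "ceq c (etag 2 * ((-1)^j * fps_X ^ (dd j n ^ 2) * qb (fps_X ^ 2) (2*n) j)) ((-1)^j * fps_X ^ (dd j n ^ 2))"
      by (intro gauss_term) (auto simp: n_def)
  qed
  have c1: "ceq c (etag 2 * ((-1)^n * Q^2)) (Rn n)" using a unfolding Q_def finite_gauss .
  have c2: "ceq c (Rn n) ((-1)^n * theta)" by (rule Rn_theta) (simp add: n_def)
  have "ceq c (etag 2 * ((-1)^n * Q^2)) ((-1)^n * theta)" using ceq_trans[OF c1 c2] .
  then have "ceq c ((-1)^n * (etag 2 * ((-1)^n * Q^2))) ((-1)^n * ((-1)^n * theta))"
    by (rule ceq_mult[OF ceq_refl])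
  moreover have m1: "((-1::complex fps)^n) * ((-1)^n) = 1" by (simp flip: power_mult_distrib)
  moreover have "(-1)^n * (etag 2 * ((-1)^n * Q^2)) = ((-1)^n * (-1)^n) * (etag 2 * Q^2)" by (simp only: mult_ac)
  moreover have "(-1)^n * ((-1)^n * theta) = ((-1)^n * (-1)^n) * theta" by (simp only: mult_ac)
  ultimately have b: "ceq c (etag 2 * Q^2) theta" by (simp only: m1 mult_1)
  have e2: "ceq c (etag 2) (\<Prod>k\<in>{1..n}. (1 - fps_X ^ (2*k)))" by (intro etag_trunc) (auto simp: n_def)
  have e1: "ceq c (etag 1) (\<Prod>k\<in>{1..2*n}. (1 - fps_X ^ k))" using etag_trunc[of 1 c "2*n"] by (simp add: n_def)
  note [trans] = ceq_trans
  have "ceq c (etag 2 * theta) (etag 2 * (etag 2 * Q^2))" using b by (intro ceq_mult[OF ceq_refl] ceq_sym[OF b])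
  also have "ceq c (etag 2 * (etag 2 * Q^2)) ((\<Prod>k\<in>{1..n}. (1 - fps_X ^ (2*k))) * ((\<Prod>k\<in>{1..n}. (1 - fps_X ^ (2*k))) * Q^2))"
    by (intro ceq_mult[OF e2] ceq_mult[OF e2 ceq_refl])
  also have "(\<Prod>k\<in>{1..n}. (1 - fps_X ^ (2*k))) * ((\<Prod>k\<in>{1..n}. (1 - fps_X ^ (2*k))) * Q^2) =
     (\<Prod>k\<in>{1..2*n}. (1 - fps_X ^ k))^2"
    unfolding Q_def prod_1_2n by (simp only: power2_eq_square mult_1 mult_ac)
  also have "ceq c ((\<Prod>k\<in>{1..2*n}. (1 - fps_X ^ k))^2) (etag 1 ^ 2)"
    by (intro ceq_power ceq_sym[OF e1])
  finally show "ceq c (etag 1 ^ 2) (etag 2 * theta)" by (rule ceq_sym)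
qed



definition w :: complex where "w = Complex (-1/2) (sqrt 3 / 2)"

lemma w2: "w^2 = Complex (-1/2) (- sqrt 3 / 2)"
  by (simp add: w_def power2_eq_square complex_eq_iff)
lemma w3: "w^3 = 1"
proof -
  have "w^3 = w^2 * w" by (simp add: power3_eq_cube power2_eq_square)
  also have "\<dots> = 1" unfolding w2 by (simp add: w_def complex_eq_iff)
  finally show ?thesis .
qed
lemma w_sum: "1 + w + w^2 = 0"
  unfolding w2 by (simp add: w_def complex_eq_iff)

lemma w_pow: "w ^ n = w ^ (n mod 3)"
proof -
  have "w ^ n = (w^3)^(n div 3) * w ^ (n mod 3)"
    by (simp flip: power_mult power_add)
  then show ?thesis by (simp add: w3)
qed

lemma w_pow_dvd: "3 dvd n \<Longrightarrow> w ^ n = 1"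
  by (subst w_pow) simp

lemma w_prim:
  assumes "\<not> 3 dvd n"
  shows "(w^n)^3 = 1" "1 + w^n + (w^n)^2 = 0"
proof -
  show "(w^n)^3 = 1" by (simp flip: power_mult add: mult.commute[of n] power_mult w3)
  have "n mod 3 = 1 \<or> n mod 3 = 2" using assms by presburger
  then show "1 + w^n + (w^n)^2 = 0"
  proof
    assume "n mod 3 = 1"
    then have "w^n = w" by (subst w_pow) simp
    then show ?thesis using w_sum by simp
  next
    assume h: "n mod 3 = 2"
    then have "w^n = w^2" by (subst w_pow) simp
    moreover have "(w^2)^2 = w"
    proof -
      have "(w^2)^2 = w^3 * w" by (simp add: power2_eq_square power3_eq_cube)
      then show ?thesis using w3 by simp
    qed
    ultimately show ?thesis using w_sum by (simp add: algebra_simps)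
  qed
qed

definition sc :: "complex \<Rightarrow> complex fps \<Rightarrow> complex fps" where
  "sc z f = f oo (fps_const z * fps_X)"

lemma sc_nth[simp]: "sc z f $ n = z ^ n * f $ n"
  by (simp add: sc_def)
lemma sc_mult: "sc z (a * b) = sc z a * sc z b"
  unfolding sc_def by (rule fps_compose_mult_distrib) simp
lemma sc_add: "sc z (a + b) = sc z a + sc z b"
  unfolding sc_def by (rule fps_compose_add_distrib)
lemma sc_diff: "sc z (a - b) = sc z a - sc z b"
  unfolding sc_def by (rule fps_compose_sub_distrib)
lemma sc_power: "sc z (a ^ n) = sc z a ^ n"
  unfolding sc_def by (rule fps_compose_power[symmetric]) simp
lemma sc_prod: "sc z (prod f S) = prod (\<lambda>k. sc z (f k)) S"
  unfolding sc_def by (rule fps_compose_prod_distrib) simp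
lemma sc_1[simp]: "sc z 1 = 1" by (simp add: sc_def)
lemma sc_one_minus': "sc z (1 - fps_X ^ n) = 1 - fps_const (z ^ n) * fps_X ^ n"
  unfolding sc_def by (rule sc_one_minus)
lemma sc_dil3: "sc w (H oo fps_X ^ 3) = H oo fps_X ^ 3"
  by (rule fps_ext) (simp add: dil_nth w_pow_dvd)
lemma sc_dil3': "sc (w^2) (H oo fps_X ^ 3) = H oo fps_X ^ 3"
  by (rule fps_ext) (auto simp add: dil_nth w_pow_dvd simp flip: power_mult)
lemma ceq_sc': "ceq c a b \<Longrightarrow> ceq c (sc z a) (sc z b)"
  by (simp add: ceq_def)

lemma cubic:
  fixes Y :: "complex fps"
  assumes "z^3 = 1" "1 + z + z^2 = 0"
  shows "(1 - Y) * (1 - fps_const z * Y) * (1 - fps_const (z^2) * Y) = 1 - Y^3"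
proof -
  define Z where "Z = fps_const z"
  have Z3: "Z^3 = 1" using assms(1) by (simp add: Z_def fps_const_power)
  have Zs: "1 + Z + Z^2 = 0" using assms(2) unfolding Z_def
    by (metis fps_const_1_eq_1 fps_const_add fps_const_power fps_const_0_eq_0)
  have "(1 - Y) * (1 - Z * Y) * (1 - Z^2 * Y) = 1 - (1+Z+Z^2)*Y + Z*(1+Z+Z^2)*Y^2 - Z^3*Y^3"
    by (simp add: algebra_simps power2_eq_square power3_eq_cube)
  then show ?thesis using Z3 Zs by (simp add: Z_def fps_const_power)
qed

lemma block3: "prod g {1..3*(M::nat)} = (\<Prod>m<M. g (3*m+1) * g (3*m+2) * g (3*m+3))"
proof (induction M)
  case 0 then show ?case by simp
next
  case (Suc M)
  have "{1..3 * Suc M} = insert (3*M+3) (insert (3*M+2) (insert (3*M+1) {1..3*M}))" by auto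
  then show ?case using Suc by (simp add: mult_ac)
qed

lemma not3_mult: "\<not> 3 dvd (a::nat) \<Longrightarrow> \<not> 3 dvd b \<Longrightarrow> \<not> 3 dvd (a * b)"
proof -
  assume a: "\<not> 3 dvd a" and b: "\<not> 3 dvd b"
  have "(a * b) mod 3 = ((a mod 3) * (b mod 3)) mod 3" by (simp add: mod_mult_eq)
  moreover have "a mod 3 = 1 \<or> a mod 3 = 2" "b mod 3 = 1 \<or> b mod 3 = 2" using a b by presburger+
  ultimately have "(a * b) mod 3 \<noteq> 0" by auto
  then show ?thesis by presburger
qed

lemma sc_etag_trunc:
  assumes "i \<ge> 1" "c \<le> M"
  shows "ceq c (sc z (etag i)) (\<Prod>j\<in>{1..M}. (1 - fps_const (z^(i*j)) * fps_X^(i*j)))"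
proof -
  have "ceq c (sc z (etag i)) (sc z (\<Prod>j\<in>{1..M}. (1 - fps_X^(i*j))))"
    by (rule ceq_sc'[OF etag_trunc[OF assms]])
  then show ?thesis by (simp add: sc_prod sc_one_minus')
qed

lemma claimC:
  assumes i1: "i \<ge> 1" and i3: "\<not> 3 dvd i"
  shows "etag i * sc w (etag i) * sc (w^2) (etag i) * etag (9*i) = etag (3*i) ^ 4"
proof (rule ceq_eq)
  fix c :: nat
  note [trans] = ceq_trans
  define M where "M = c"
  define h where "h j = (1 - fps_X^(i*j)) * (1 - fps_const (w^(i*j)) * fps_X^(i*j)) *
                         (1 - fps_const ((w^2)^(i*j)) * fps_X^(i*j))" for j
  define g where "g j = (1 - fps_X^(3*i*j) :: complex fps)" for j
  have t1: "ceq c (etag i) (\<Prod>j\<in>{1..3*M}. (1 - fps_X^(i*j)))"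
    using i1 by (intro etag_trunc) (auto simp: M_def)
  have tw: "ceq c (sc w (etag i)) (\<Prod>j\<in>{1..3*M}. (1 - fps_const (w^(i*j)) * fps_X^(i*j)))"
    using i1 by (intro sc_etag_trunc) (auto simp: M_def)
  have tw2: "ceq c (sc (w^2) (etag i)) (\<Prod>j\<in>{1..3*M}. (1 - fps_const ((w^2)^(i*j)) * fps_X^(i*j)))"
    using i1 by (intro sc_etag_trunc) (auto simp: M_def)
  have t9: "ceq c (etag (9*i)) (\<Prod>k\<in>{1..M}. (1 - fps_X^(9*i*k)))"
    using i1 by (intro etag_trunc) (auto simp: M_def)
  have t3: "ceq c (etag (3*i)) (\<Prod>j\<in>{1..3*M}. g j)"
    unfolding g_def using i1 by (intro etag_trunc) (auto simp: M_def)
  have t3': "ceq c (etag (3*i)) (\<Prod>k\<in>{1..M}. g k)"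
    unfolding g_def using i1 by (intro etag_trunc) (auto simp: M_def)
  have "ceq c (etag i * sc w (etag i) * sc (w^2) (etag i) * etag (9*i))
     ((\<Prod>j\<in>{1..3*M}. (1 - fps_X^(i*j))) * (\<Prod>j\<in>{1..3*M}. (1 - fps_const (w^(i*j)) * fps_X^(i*j)))
       * (\<Prod>j\<in>{1..3*M}. (1 - fps_const ((w^2)^(i*j)) * fps_X^(i*j))) * (\<Prod>k\<in>{1..M}. (1 - fps_X^(9*i*k))))"
    by (intro ceq_mult t1 tw tw2 t9)
  also have "\<dots> = (\<Prod>j\<in>{1..3*M}. h j) * (\<Prod>k\<in>{1..M}. (1 - fps_X^(9*i*k)))"
    unfolding h_def by (simp only: prod.distrib)
  also have "\<dots> = (\<Prod>m<M. (1 - fps_X^(3*i*(3*m+1))) * (1 - fps_X^(3*i*(3*m+2))) * (1 - fps_X^(3*i*(m+1)))^3 * (1 - fps_X^(9*i*(m+1))))"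
  proof -
    have hA: "h (3*m+1) = 1 - fps_X^(3*i*(3*m+1))" for m
    proof -
      have n3: "\<not> 3 dvd (i*(3*m+1))" using i3 by (intro not3_mult) presburger+
      have "(w^2)^(i*(3*m+1)) = (w^(i*(3*m+1)))^2" by (simp flip: power_mult add: mult.commute)
      then have "h (3*m+1) = 1 - (fps_X^(i*(3*m+1)))^3"
        unfolding h_def using cubic[OF w_prim[OF n3]] by simp
      then show ?thesis by (simp flip: power_mult add: mult_ac)
    qed
    have hB: "h (3*m+2) = 1 - fps_X^(3*i*(3*m+2))" for m
    proof -
      have n3: "\<not> 3 dvd (i*(3*m+2))" using i3 by (intro not3_mult) presburger+
      have "(w^2)^(i*(3*m+2)) = (w^(i*(3*m+2)))^2" by (simp flip: power_mult add: mult.commute)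
      then have "h (3*m+2) = 1 - (fps_X^(i*(3*m+2)))^3"
        unfolding h_def using cubic[OF w_prim[OF n3]] by simp
      then show ?thesis by (simp flip: power_mult add: mult_ac)
    qed
    have hC: "h (3*m+3) = (1 - fps_X^(3*i*(m+1)))^3" for m
    proof -
      have d: "3 dvd (i*(3*m+3))" by simp
      have e: "i*(3*m+3) = 3*i*(m+1)" by (simp add: algebra_simps)
      have "w^(i*(3*m+3)) = 1" using d by (rule w_pow_dvd)
      moreover have "(w^2)^(i*(3*m+3)) = 1"
      proof -
        have "(w^2)^(i*(3*m+3)) = (w^(i*(3*m+3)))^2" by (simp flip: power_mult add: mult.commute)
        then show ?thesis using w_pow_dvd[OF d] by simp
      qed
      ultimately show ?thesis unfolding h_def e by (simp add: power3_eq_cube)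
    qed
    have "(\<Prod>k\<in>{1..M}. (1 - fps_X^(9*i*k)) :: complex fps) = (\<Prod>m<M. (1 - fps_X^(9*i*(m+1))))"
      using prod.atLeast1_atMost_eq[of "\<lambda>k. (1 - fps_X^(9*i*k)) :: complex fps" M] by simp
    then show ?thesis
      unfolding block3 hA hB hC by (simp add: prod.distrib)
  qed
  also have "\<dots> = (\<Prod>j\<in>{1..3*M}. g j) * (\<Prod>k\<in>{1..M}. g k) ^ 3"
  proof -
    have G1: "(\<Prod>k\<in>{1..M}. g k) = (\<Prod>m<M. g (m+1))"
      using prod.atLeast1_atMost_eq[of g M] by simp
    have G3: "g (3*m+3) = 1 - fps_X^(9*i*(m+1))" for m
    proof -
      have "3*i*(3*m+3) = 9*i*(m+1)" by (simp add: algebra_simps)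
      then show ?thesis by (simp add: g_def)
    qed
    have "(\<Prod>j\<in>{1..3*M}. g j) * (\<Prod>k\<in>{1..M}. g k) ^ 3 = (\<Prod>m<M. g (3*m+1) * g (3*m+2) * g (3*m+3) * g (m+1) ^ 3)"
      by (simp only: block3 G1 prod_power_distrib prod.distrib)
    also have "\<dots> = (\<Prod>m<M. (1 - fps_X^(3*i*(3*m+1))) * (1 - fps_X^(3*i*(3*m+2))) * (1 - fps_X^(3*i*(m+1)))^3 * (1 - fps_X^(9*i*(m+1))))"
      apply (intro prod.cong refl)
      apply (subst G3)
      apply (simp only: g_def mult_ac)
      done
    finally show ?thesis by (rule sym)
  qed
  also have "ceq c \<dots> (etag (3*i) * etag (3*i) ^ 3)"
    by (intro ceq_mult ceq_power ceq_sym[OF t3] ceq_sym[OF t3'])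
  also have "etag (3*i) * etag (3*i) ^ 3 = etag (3*i) ^ 4"
    by (simp add: power_Suc[symmetric] del: power_Suc)
  finally show "ceq c (etag i * sc w (etag i) * sc (w^2) (etag i) * etag (9*i)) (etag (3*i) ^ 4)" .
qed



lemma sq_mod3: "(r::nat)^2 mod 3 = 0 \<or> r^2 mod 3 = 1"
proof -
  have "r^2 mod 3 = ((r mod 3) * (r mod 3)) mod 3" by (simp add: power2_eq_square mod_mult_eq)
  moreover have "r mod 3 = 0 \<or> r mod 3 = 1 \<or> r mod 3 = 2" by presburger
  ultimately show ?thesis by auto
qed

lemma sq_dvd3: "3 dvd (r::nat)^2 \<Longrightarrow> 3 dvd r"
proof -
  assume h: "3 dvd r^2"
  have "r^2 mod 3 = ((r mod 3) * (r mod 3)) mod 3" by (simp add: power2_eq_square mod_mult_eq)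
  moreover have "r mod 3 = 0 \<or> r mod 3 = 1 \<or> r mod 3 = 2" by presburger
  ultimately show "3 dvd r" using h by (auto simp: dvd_eq_mod_eq_0)
qed

lemma theta_mod2: "n mod 3 = 2 \<Longrightarrow> theta $ n = 0"
proof (rule theta_nonsq, rule notI)
  assume "n mod 3 = 2" "\<exists>r. r^2 = n"
  then obtain r where "r^2 = n" by auto
  then show False using sq_mod3[of r] \<open>n mod 3 = 2\<close> by simp
qed

lemma theta_mod0: "3 dvd n \<Longrightarrow> \<not> 9 dvd n \<Longrightarrow> theta $ n = 0"
proof (rule theta_nonsq, rule notI)
  assume "3 dvd n" "\<not> 9 dvd n" "\<exists>r. r^2 = n"
  then obtain r where r: "r^2 = n" by auto
  then have "3 dvd r" using \<open>3 dvd n\<close> sq_dvd3 by auto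
  then obtain s where "r = 3 * s" by auto
  then have "n = 9 * s^2" using r by (simp add: power2_eq_square)
  then show False using \<open>\<not> 9 dvd n\<close> by simp
qed

lemma theta_9: "theta $ (9 * m) = theta $ m"
proof (cases "\<exists>s. s^2 = m")
  case True
  then obtain s where s: "m = s^2" by auto
  have e: "9 * m = (3*s)^2" using s by (simp add: power2_eq_square)
  have "theta $ (9*m) = theta $ ((3*s)^2)" by (simp only: e)
  also have "\<dots> = (if 3*s = 0 then 1 else 2 * (-1)^(3*s))" by (rule theta_sq)
  also have "\<dots> = (if s = 0 then 1 else 2 * (-1)^s)" by (simp add: power_mult)
  also have "\<dots> = theta $ m" using s theta_sq by simp
  finally show ?thesis .
next
  case False
  have "\<not> (\<exists>r. r^2 = 9 * m)"
  proof
    assume "\<exists>r. r^2 = 9 * m"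
    then obtain r where r: "r^2 = 9 * m" by auto
    then have "r^2 = 3 * (3 * m)" by simp
    then have "3 dvd r^2" by (simp only: dvd_triv_left)
    then have "3 dvd r" by (rule sq_dvd3)
    then obtain s where "r = 3 * s" by auto
    then have "s^2 = m" using r by (simp add: power2_eq_square)
    then show False using False by auto
  qed
  then show ?thesis using False by (simp add: theta_nonsq)
qed

definition thA :: "complex fps" where "thA = theta oo fps_X ^ 9"
definition thB :: "complex fps" where "thB = theta - thA"

lemma thA_nth: "thA $ n = (if 9 dvd n then theta $ (n div 9) else 0)"
  unfolding thA_def by (simp add: dil_nth)

lemma thB_nth: "thB $ n = (if n mod 3 = 1 then theta $ n else 0)"
proof -
  have "n mod 3 = 0 \<or> n mod 3 = 1 \<or> n mod 3 = 2" by presburger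
  moreover
  { assume h: "n mod 3 = 0"
    have ?thesis
    proof (cases "9 dvd n")
      case True
      then obtain m where "n = 9 * m" by auto
      then show ?thesis using h by (simp add: thB_def thA_nth theta_9)
    next
      case False
      then show ?thesis using h by (simp add: thB_def thA_nth theta_mod0 dvd_eq_mod_eq_0)
    qed }
  moreover
  { assume h: "n mod 3 = 1"
    then have "\<not> 9 dvd n" by presburger
    then have ?thesis using h by (simp add: thB_def thA_nth) }
  moreover
  { assume h: "n mod 3 = 2"
    then have "\<not> 9 dvd n" by presburger
    then have ?thesis using h by (simp add: thB_def thA_nth theta_mod2) }
  ultimately show ?thesis by meson
qed

lemma sc_thA: "sc z thA = thA" if "z^3 = 1"
proof (rule fps_ext)
  fix n
  show "sc z thA $ n = thA $ n"
  proof (cases "9 dvd n")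
    case True
    then obtain m where m: "n = 3 * (3 * m)" by auto
    have "z ^ (3 * (3 * m)) = (z^3) ^ (3 * m)" by (simp only: power_mult)
    then have "z ^ n = 1" using that m by simp
    then show ?thesis by simp
  qed (simp add: thA_nth)
qed

lemma w2_3: "(w^2)^3 = 1"
proof -
  have "(w^2)^3 = (w^3)^2" by (simp only: power_mult[symmetric] mult.commute)
  then show ?thesis using w3 by simp
qed

lemma sc_thB: "sc z thB = fps_const z * thB" if "z^3 = 1"
proof (rule fps_ext)
  fix n
  show "sc z thB $ n = (fps_const z * thB) $ n"
  proof (cases "n mod 3 = 1")
    case True
    then obtain q where q: "n = 3 * q + 1" by (metis mult_div_mod_eq add.commute)
    have "z ^ (3 * q + 1) = (z^3)^q * z" by (simp only: power_add power_mult power_one_right)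
    then have "z ^ n = z" using that q by simp
    then show ?thesis by simp
  qed (simp add: thB_nth)
qed

lemma ringA:
  fixes a b W :: "'a::comm_ring_1"
  shows "(a+b)*(a+W*b) + (a+b)*(a+W^2*b) + (a+W*b)*(a+W^2*b) =
         3*a^2 + 2*(1+W+W^2)*a*b + W*(1+W+W^2)*b^2"
  by (simp add: algebra_simps power2_eq_square power3_eq_cube)

lemma claimA: "theta * sc w theta + theta * sc (w^2) theta + sc w theta * sc (w^2) theta = fps_const 3 * thA^2"
proof -
  define W where "W = fps_const w"
  have th: "theta = thA + thB" by (simp add: thB_def)
  have s1: "sc w theta = thA + W * thB" unfolding th sc_add W_def using w3 by (simp add: sc_thA sc_thB)
  have s2: "sc (w^2) theta = thA + W^2 * thB" unfolding th sc_add W_def using w2_3 by (simp add: sc_thA sc_thB fps_const_power)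
  have W3: "W^3 = 1" unfolding W_def using w3 by (simp add: fps_const_power)
  have Ws: "1 + W + W^2 = 0" unfolding W_def using w_sum
    by (metis fps_const_1_eq_1 fps_const_add fps_const_power fps_const_0_eq_0)
  have "theta * sc w theta + theta * sc (w^2) theta + sc w theta * sc (w^2) theta =
        3 * thA^2 + 2 * (1 + W + W^2) * thA * thB + W * (1 + W + W^2) * thB^2"
    apply (simp only: s1 s2)
    apply (simp only: th)
    apply (rule ringA)
    done
  also have "\<dots> = 3 * thA^2" using W3 Ws by simp
  finally show ?thesis by (simp add: numeral_fps_const)
qed



lemma abstractB:
  fixes P1 P2 N f3 f6 f9 f18 T3 T9 :: "'a::idom"
  assumes h1: "P1^2 = P2 * N" and h2: "P1 * f9 = f3^4" and h3: "P2 * f18 = f6^4"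
    and h4: "f3^2 = f6 * T3" and h5: "f9^2 = f18 * T9" and nz: "f6 \<noteq> 0" "f18 \<noteq> 0"
  shows "N * T9 = T3^4"
proof -
  have "N * T9 * (f6^4 * f18) = N * T9 * (P2 * f18) * f18" by (simp only: h3 mult.assoc)
  also have "\<dots> = (P2 * N) * (f18 * T9) * f18" by (simp only: mult_ac)
  also have "\<dots> = P1^2 * f9^2 * f18" by (simp only: h1 h5)
  also have "\<dots> = (P1 * f9)^2 * f18" by (simp only: power_mult_distrib)
  also have "\<dots> = (f3^2)^4 * f18" by (simp only: h2 power_mult[symmetric] mult.commute)
  also have "\<dots> = (f6 * T3)^4 * f18" by (simp only: h4)
  also have "\<dots> = T3^4 * (f6^4 * f18)" by (simp only: power_mult_distrib mult_ac)
  finally have "N * T9 * (f6^4 * f18) = T3^4 * (f6^4 * f18)" .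
  moreover have "f6^4 * f18 \<noteq> 0" using nz by simp
  ultimately show ?thesis by simp
qed

lemma abstractFinal:
  fixes F T s1 s2 sF1 sF2 D A E G three :: "'a::idom"
  assumes hF: "F * T = D" and hF1: "sF1 * s1 = D" and hF2: "sF2 * s2 = D"
    and hE: "three * E = F + sF1 + sF2"
    and hA: "T * s1 + T * s2 + s1 * s2 = three * A^2"
    and hB: "T * s1 * s2 * A = D^4"
    and hG: "G * D = A"
    and nz: "three \<noteq> 0" "D \<noteq> 0"
  shows "E = G^3"
proof -
  have "three * (E * (T * s1 * s2)) = (F * T) * s1 * s2 + (sF1 * s1) * T * s2 + (sF2 * s2) * T * s1"
    by (simp only: mult.assoc[symmetric] hE) (simp add: algebra_simps)
  also have "\<dots> = D * (T * s1 + T * s2 + s1 * s2)" by (simp only: hF hF1 hF2) (simp add: algebra_simps)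
  also have "\<dots> = three * (D * A^2)" by (simp only: hA mult_ac)
  finally have e1: "E * (T * s1 * s2) = D * A^2" using nz(1) by simp
  have "E * D^4 = E * (T * s1 * s2 * A)" by (simp only: hB)
  also have "\<dots> = E * (T * s1 * s2) * A" by (simp only: mult.assoc)
  also have "\<dots> = D * A^3" by (simp only: e1) (simp add: power2_eq_square power3_eq_cube mult_ac)
  also have "\<dots> = D * (G^3 * D^3)" by (simp only: hG[symmetric] power_mult_distrib)
  finally have f: "E * D^4 = D * (G^3 * D^3)" .
  have "D^4 = D^3 * D" by (simp add: eval_nat_numeral mult_ac)
  then have "(E * D^3) * D = E * D^4" by (simp only: mult.assoc)
  also have "\<dots> = (G^3 * D^3) * D" by (simp only: f mult.commute)
  finally have "(E * D^3) * D = (G^3 * D^3) * D" .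
  then have "E * D^3 = G^3 * D^3" using nz(2) by simp
  then show ?thesis using nz(2) by simp
qed



lemma dil_mult: "k \<ge> 1 \<Longrightarrow> (a * b) oo fps_X ^ k = (a oo fps_X ^ k) * (b oo fps_X ^ (k::nat) :: complex fps)"
  by (rule fps_compose_mult_distrib) simp
lemma dil_power: "k \<ge> 1 \<Longrightarrow> (a ^ n) oo fps_X ^ k = (a oo fps_X ^ k) ^ n"
  for a :: "complex fps" by (rule fps_compose_power[symmetric]) simp

lemma gauss_dil: "k \<ge> 1 \<Longrightarrow> etag k ^ 2 = etag (2*k) * (theta oo fps_X ^ k)"
proof -
  assume k: "k \<ge> 1"
  have "(etag 1 ^ 2) oo fps_X ^ k = (etag 2 * theta) oo fps_X ^ k" by (simp only: gauss)
  then show ?thesis using k by (simp add: dil_mult dil_power dil_etag mult.commute)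
qed

lemma gauss_sc: "sc z (etag 1) ^ 2 = sc z (etag 2) * sc z theta"
  by (simp only: gauss sc_mult sc_power[symmetric])

lemma nz0: "f $ 0 \<noteq> 0 \<Longrightarrow> f \<noteq> 0" by auto

lemma claimB: "theta * sc w theta * sc (w^2) theta * thA = (theta oo fps_X ^ 3) ^ 4"
proof (rule abstractB)
  show "(etag 1 * sc w (etag 1) * sc (w^2) (etag 1))^2 =
        (etag 2 * sc w (etag 2) * sc (w^2) (etag 2)) * (theta * sc w theta * sc (w^2) theta)"
    by (simp only: power_mult_distrib gauss gauss_sc) (simp only: mult_ac)
  show "etag 1 * sc w (etag 1) * sc (w^2) (etag 1) * etag 9 = etag 3 ^ 4"
    using claimC[of 1] by simp
  show "etag 2 * sc w (etag 2) * sc (w^2) (etag 2) * etag 18 = etag 6 ^ 4"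
    using claimC[of 2] by simp
  show "etag 3 ^ 2 = etag 6 * (theta oo fps_X ^ 3)" using gauss_dil[of 3] by simp
  show "etag 9 ^ 2 = etag 18 * thA" using gauss_dil[of 9] by (simp add: thA_def)
  show "etag 6 \<noteq> 0" "etag 18 \<noteq> 0" by (auto intro!: nz0)
qed

definition S3 :: "complex fps \<Rightarrow> complex fps" where "S3 F = Abs_fps (\<lambda>n. F $ (3 * n))"

lemma hE: "fps_const 3 * (S3 F oo fps_X ^ 3) = F + sc w F + sc (w^2) F"
proof (rule fps_ext)
  fix n :: nat
  have "n mod 3 = 0 \<or> n mod 3 = 1 \<or> n mod 3 = 2" by presburger
  moreover have "(w^2)^n = (w^n)^2" by (simp flip: power_mult add: mult.commute)
  moreover have "(w^2)^2 = w"
  proof -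
    have "(w^2)^2 = w^3 * w" by (simp add: power2_eq_square power3_eq_cube)
    then show ?thesis using w3 by simp
  qed
  ultimately have C: "(if 3 dvd n then 3 else 0) = 1 + w^n + (w^2)^n"
    using w_sum w_pow[of n] w3 by (auto simp: dvd_eq_mod_eq_0 algebra_simps)
  have R: "(F + sc w F + sc (w^2) F) $ n = (1 + w^n + (w^2)^n) * F $ n" by (simp add: algebra_simps)
  have L: "(fps_const 3 * (S3 F oo fps_X ^ 3)) $ n = (if 3 dvd n then 3 else 0) * F $ n"
    by (simp add: S3_def dil_nth)
  show "(fps_const 3 * (S3 F oo fps_X ^ 3)) $ n = (F + sc w F + sc (w^2) F) $ n"
    unfolding L R C ..
qed

lemma dil33: "(H oo fps_X ^ 3) oo fps_X ^ 3 = H oo fps_X ^ (9::nat)" for H :: "complex fps"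
proof (rule fps_ext)
  fix n
  show "((H oo fps_X ^ 3) oo fps_X ^ 3) $ n = (H oo fps_X ^ 9) $ n"
  proof (cases "9 dvd n")
    case True
    then obtain m where "n = 9 * m" by auto
    then show ?thesis by (simp add: dil_nth)
  next
    case False
    then show ?thesis by (auto simp: dil_nth)
  qed
qed

lemma main_complex:
  assumes hP: "F * (etag 1 ^ 2 * etag 6) = etag 2 * etag 3 ^ 2"
  shows "S3 F = F ^ 3"
proof -
  have g3: "etag 3 ^ 2 = etag 6 * (theta oo fps_X ^ 3)" using gauss_dil[of 3] by simp
  have "(F * theta) * (etag 2 * etag 6) = (theta oo fps_X ^ 3) * (etag 2 * etag 6)"
    using hP unfolding gauss g3 by (simp add: mult_ac)
  moreover have "etag 2 * etag 6 \<noteq> 0" by (auto intro!: nz0)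
  ultimately have hF: "F * theta = theta oo fps_X ^ 3" by simp
  have hF1: "sc w F * sc w theta = theta oo fps_X ^ 3"
    using arg_cong[OF hF, of "sc w"] by (simp add: sc_mult sc_dil3)
  have hF2: "sc (w^2) F * sc (w^2) theta = theta oo fps_X ^ 3"
    using arg_cong[OF hF, of "sc (w^2)"] by (simp add: sc_mult sc_dil3')
  have hG: "(F oo fps_X ^ 3) * (theta oo fps_X ^ 3) = thA"
    using arg_cong[OF hF, of "\<lambda>x. x oo fps_X ^ 3"] by (simp add: dil_mult dil33 thA_def)
  have "S3 F oo fps_X ^ 3 = (F oo fps_X ^ 3) ^ 3"
    by (rule abstractFinal[OF hF hF1 hF2 hE claimA claimB hG]) (auto intro!: nz0)
  then have e: "S3 F oo fps_X ^ 3 = F ^ 3 oo fps_X ^ 3" by (simp add: dil_power)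
  show ?thesis
  proof (rule fps_ext)
    fix n
    have "(S3 F oo fps_X ^ 3) $ (3 * n) = (F ^ 3 oo fps_X ^ 3) $ (3 * n)" using e by simp
    then show "S3 F $ n = (F ^ 3) $ n" by (simp add: dil_nth)
  qed
qed



definition iota :: "rat fps \<Rightarrow> complex fps" where
  "iota f = Abs_fps (\<lambda>n. of_rat (f $ n))"

lemma iota_nth[simp]: "iota f $ n = of_rat (f $ n)" by (simp add: iota_def)
lemma iota_mult: "iota (a * b) = iota a * iota b"
  by (rule fps_ext) (simp add: fps_mult_nth of_rat_sum of_rat_mult)
lemma iota_diff: "iota (a - b) = iota a - iota b"
  by (rule fps_ext) (simp add: of_rat_diff)
lemma iota_1[simp]: "iota 1 = 1"
  by (rule fps_ext) simp
lemma iota_Xp[simp]: "iota (fps_X ^ k) = fps_X ^ k"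
  by (rule fps_ext) simp
lemma iota_power: "iota (a ^ n) = iota a ^ n"
  by (induction n) (simp_all add: iota_mult)
lemma iota_prod: "iota (prod f S) = prod (\<lambda>k. iota (f k)) S"
  by (induction S rule: infinite_finite_induct) (simp_all add: iota_mult)
lemma iota_inj: "iota a = iota b \<Longrightarrow> a = b"
  by (rule fps_ext) (metis iota_nth of_rat_eq_iff)

lemma iota_eta: "iota (eta_fps i) = etag i"
proof (rule fps_ext)
  fix n
  have "iota (eta_fps i) $ n = iota (\<Prod>k\<in>{1..n}. (1 - fps_X ^ (i * k))) $ n"
    by (simp add: eta_fps_def)
  also have "iota (\<Prod>k\<in>{1..n}. (1 - fps_X ^ (i * k))) = (\<Prod>k\<in>{1..n}. (1 - fps_X ^ (i * k)))"
    by (simp add: iota_prod iota_diff)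
  finally show "iota (eta_fps i) $ n = etag i $ n" by (simp add: etag_def)
qed

lemma eta_fps_0: "eta_fps i $ 0 = 1" by (simp add: eta_fps_def)

theorem theorem4p3:
  shows "m_convolutive 3 P_seq"
proof -
  define P where "P = eta_fps 2 * eta_fps 3 ^ 2 / (eta_fps 1 ^ 2 * eta_fps 6)"
  have Pseq: "P_seq = (\<lambda>n. P $ n)" by (rule ext) (simp add: P_seq_def P_def)
  have d0: "(eta_fps 1 ^ 2 * eta_fps 6) $ 0 \<noteq> 0" by (simp add: eta_fps_0)
  have "P * (eta_fps 1 ^ 2 * eta_fps 6) = eta_fps 2 * eta_fps 3 ^ 2"
    unfolding P_def fps_divide_unit[OF d0] using inverse_mult_eq_1[OF d0] by (simp add: mult.assoc)
  then have "iota P * (etag 1 ^ 2 * etag 6) = etag 2 * etag 3 ^ 2"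
    using arg_cong[of _ _ iota] by (metis iota_mult iota_power iota_eta)
  then have "S3 (iota P) = iota P ^ 3" by (rule main_complex)
  moreover have "iota (Abs_fps (\<lambda>n. P $ (3 * n))) = S3 (iota P)"
    by (rule fps_ext) (simp add: S3_def)
  ultimately have "iota (Abs_fps (\<lambda>n. P $ (3 * n))) = iota (P ^ 3)"
    by (simp add: iota_power)
  then have "Abs_fps (\<lambda>n. P $ (3 * n)) = P ^ 3" by (rule iota_inj)
  then show ?thesis unfolding m_convolutive_def Pseq by (simp add: fps_nth_inverse)
qed

end
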